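(* Let $E$, $D$, $S$ be binary random variables taking values in $\{0,1\}$ such that every joint cell probability $P(E=e,D=d,S=s)$ is positive, and write $p(d,e)=P(S=1\mid D=d,E=e)$ and $o(d,e)=p(d,e)/(1-p(d,e))$. Define the interaction measures $$I_{OR}=\frac{o(1,1)\,o(0,0)}{o(1,0)\,o(0,1)},\quad I_{RR}=\frac{p(1,1)\,p(0,0)}{p(1,0)\,p(0,1)},\quad I_{RD}=p(1,1)+p(0,0)-p(1,0)-p(0,1).$$ (a) Suppose that at least one of $I_{OR}\le 1$, $I_{RR}\le 1$, $I_{RD}\le 0$ holds (non-positive interaction of $E$ and $D$ on $S$ on the odds ratio, risk ratio, or risk difference scale, respectively), and that $p(d,e)$ is non-decreasing in both $d$ and $e$, or non-increasing in both $d$ and $e$. Then $\mathrm{OR}_{ED\mid S=1}\le \mathrm{OR}_{ED}$. (b) Suppose that at least one of $I_{OR}\ge 1$, $I_{RR}\ge 1$, $I_{RD}\ge 0$ holds (non-negative interaction on the corresponding scale), and that $p(d,e)$ is non-decreasing in one of $d,e$ and non-increasing in the other. Then $\mathrm{OR}_{ED\mid S=1}\ge \mathrm{OR}_{ED}$.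
   Context: For binary random variables $A,B$ and a random variable $C$, $\mathrm{OR}_{AB\mid C=c}=\frac{P(A=1,B=1\mid C=c)P(A=0,B=0\mid C=c)}{P(A=1,B=0\mid C=c)P(A=0,B=1\mid C=c)}$ and $\mathrm{OR}_{AB}$ is the unconditional version. "Non-decreasing in $d$" means $p(1,e)\ge p(0,e)$ for each $e\in\{0,1\}$; "non-decreasing in $e$" means $p(d,1)\ge p(d,0)$ for each $d\in\{0,1\}$; non-increasing analogously. *)

theory Defs
  imports Complex_Main
begin

text \<open>A joint distribution of binary random variables E, D, S is given by its cell
  probabilities q e d s = P(E=e, D=d, S=s), for e, d, s in {0,1}.\<close>

definition is_joint_dist :: "(nat \<Rightarrow> nat \<Rightarrow> nat \<Rightarrow> real) \<Rightarrow> bool" where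
  "is_joint_dist q \<longleftrightarrow> (\<forall>e\<in>{0,1}. \<forall>d\<in>{0,1}. \<forall>s\<in>{0,1}. q e d s > 0)
     \<and> (\<Sum>e\<in>{0,1::nat}. \<Sum>d\<in>{0,1::nat}. \<Sum>s\<in>{0,1::nat}. q e d s) = 1"

definition P_ED :: "(nat \<Rightarrow> nat \<Rightarrow> nat \<Rightarrow> real) \<Rightarrow> nat \<Rightarrow> nat \<Rightarrow> real" where
  "P_ED q e d = (\<Sum>s\<in>{0,1::nat}. q e d s)"

definition P_S :: "(nat \<Rightarrow> nat \<Rightarrow> nat \<Rightarrow> real) \<Rightarrow> nat \<Rightarrow> real" where
  "P_S q s = (\<Sum>e\<in>{0,1::nat}. \<Sum>d\<in>{0,1::nat}. q e d s)"

definition pS :: "(nat \<Rightarrow> nat \<Rightarrow> nat \<Rightarrow> real) \<Rightarrow> nat \<Rightarrow> nat \<Rightarrow> real" where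
  "pS q d e = q e d 1 / P_ED q e d"

definition oS :: "(nat \<Rightarrow> nat \<Rightarrow> nat \<Rightarrow> real) \<Rightarrow> nat \<Rightarrow> nat \<Rightarrow> real" where
  "oS q d e = pS q d e / (1 - pS q d e)"

definition I_OR :: "(nat \<Rightarrow> nat \<Rightarrow> nat \<Rightarrow> real) \<Rightarrow> real" where
  "I_OR q = (oS q 1 1 * oS q 0 0) / (oS q 1 0 * oS q 0 1)"

definition I_RR :: "(nat \<Rightarrow> nat \<Rightarrow> nat \<Rightarrow> real) \<Rightarrow> real" where
  "I_RR q = (pS q 1 1 * pS q 0 0) / (pS q 1 0 * pS q 0 1)"

definition I_RD :: "(nat \<Rightarrow> nat \<Rightarrow> nat \<Rightarrow> real) \<Rightarrow> real" where
  "I_RD q = pS q 1 1 + pS q 0 0 - pS q 1 0 - pS q 0 1"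

definition OR_ED :: "(nat \<Rightarrow> nat \<Rightarrow> nat \<Rightarrow> real) \<Rightarrow> real" where
  "OR_ED q = (P_ED q 1 1 * P_ED q 0 0) / (P_ED q 1 0 * P_ED q 0 1)"

definition P_ED_given_S :: "(nat \<Rightarrow> nat \<Rightarrow> nat \<Rightarrow> real) \<Rightarrow> nat \<Rightarrow> nat \<Rightarrow> nat \<Rightarrow> real" where
  "P_ED_given_S q e d s = q e d s / P_S q s"

definition OR_ED_given_S :: "(nat \<Rightarrow> nat \<Rightarrow> nat \<Rightarrow> real) \<Rightarrow> nat \<Rightarrow> real" where
  "OR_ED_given_S q s = (P_ED_given_S q 1 1 s * P_ED_given_S q 0 0 s)
                     / (P_ED_given_S q 1 0 s * P_ED_given_S q 0 1 s)"

definition nondec_d :: "(nat \<Rightarrow> nat \<Rightarrow> real) \<Rightarrow> bool" where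
  "nondec_d p \<longleftrightarrow> (\<forall>e\<in>{0,1}. p 1 e \<ge> p 0 e)"
definition nondec_e :: "(nat \<Rightarrow> nat \<Rightarrow> real) \<Rightarrow> bool" where
  "nondec_e p \<longleftrightarrow> (\<forall>d\<in>{0,1}. p d 1 \<ge> p d 0)"
definition noninc_d :: "(nat \<Rightarrow> nat \<Rightarrow> real) \<Rightarrow> bool" where
  "noninc_d p \<longleftrightarrow> (\<forall>e\<in>{0,1}. p 1 e \<le> p 0 e)"
definition noninc_e :: "(nat \<Rightarrow> nat \<Rightarrow> real) \<Rightarrow> bool" where
  "noninc_e p \<longleftrightarrow> (\<forall>d\<in>{0,1}. p d 1 \<le> p d 0)"

end

theory Submission
  imports Defs
begin

lemma rd_lem:
  fixes a b c d :: real
  assumes "0 \<le> b" "b \<le> c" "b \<le> d" "a + b \<le> c + d"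
  shows "a * b \<le> c * d"
proof -
  have "a * b \<le> (c + d - b) * b" using assms by (intro mult_right_mono) auto
  also have "\<dots> \<le> c * d" using mult_nonneg_nonneg[of "c-b" "d-b"] assms by (simp add: algebra_simps)
  finally show ?thesis .
qed

lemma rd_gen:
  fixes a b c d :: real
  assumes "0 \<le> a" "0 \<le> b" "(b \<le> c \<and> b \<le> d) \<or> (a \<le> c \<and> a \<le> d)" "a + b \<le> c + d"
  shows "a * b \<le> c * d"
  using assms rd_lem[of b c d a] rd_lem[of a c d b] by (auto simp: mult.commute)

lemma or_lem:
  fixes a b c d :: real
  assumes "0 < b" "b < 1" "b \<le> c" "b \<le> d" "0 < a" "a < 1" "c < 1" "d < 1" "0 < c" "0 < d"
    and h: "a*b*((1-c)*(1-d)) \<le> c*d*((1-a)*(1-b))"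
  shows "a * b \<le> c * d"
proof (rule ccontr)
  assume n: "\<not> a * b \<le> c * d"
  hence s: "a + b > c + d" using rd_lem[of b c d a] assms by linarith
  define s where "s = a + b - c - d"
  have "a * b - c * d = -((c-b)*(d-b)) + s * b" unfolding s_def by (simp add: algebra_simps)
  moreover have "(c-b)*(d-b) \<ge> 0" using assms by simp
  moreover have "s * b < s" using s assms unfolding s_def by simp
  ultimately have "a*b - c*d < s" by linarith
  hence lt: "(1-a)*(1-b) < (1-c)*(1-d)" unfolding s_def by (simp add: algebra_simps)
  have p1: "(1-a)*(1-b) > 0" using assms by simp
  have "c*d*((1-a)*(1-b)) < a*b*((1-a)*(1-b))" using n p1 by (simp add: mult_strict_right_mono)
  also have "\<dots> < a*b*((1-c)*(1-d))" using lt assms by simp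
  finally show False using h by simp
qed

lemma or_gen:
  fixes a b c d :: real
  assumes "0 < a" "a < 1" "0 < b" "b < 1" "0 < c" "c < 1" "0 < d" "d < 1"
    "(b \<le> c \<and> b \<le> d) \<or> (a \<le> c \<and> a \<le> d)"
    and h: "a*b*((1-c)*(1-d)) \<le> c*d*((1-a)*(1-b))"
  shows "a * b \<le> c * d"
proof -
  consider "b \<le> c \<and> b \<le> d" | "a \<le> c \<and> a \<le> d" using assms by blast
  then show ?thesis
  proof cases
    case 1 thus ?thesis using or_lem[of b c d a] assms by auto
  next
    case 2
    have "b*a*((1-c)*(1-d)) \<le> c*d*((1-b)*(1-a))" using h by (simp add: mult_ac)
    hence "b * a \<le> c * d" using or_lem[of a c d b] assms 2 by auto
    thus ?thesis by (simp add: mult_ac)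
  qed
qed

lemma frac_le_cross:
  fixes x y u v :: real
  assumes "x / y \<le> u / v" "y > 0" "v > 0"
  shows "x * v \<le> u * y"
proof -
  have "x / y * (y*v) \<le> u / v * (y*v)" using assms by (intro mult_right_mono) auto
  thus ?thesis using assms by (simp add: field_simps)
qed

lemma key:
  fixes a b c d :: real
  assumes "0 < a" "a < 1" "0 < b" "b < 1" "0 < c" "c < 1" "0 < d" "d < 1"
    "(b \<le> c \<and> b \<le> d) \<or> (a \<le> c \<and> a \<le> d)"
    and h: "(a/(1-a)) * (b/(1-b)) / ((c/(1-c)) * (d/(1-d))) \<le> 1 \<or> a*b/(c*d) \<le> 1 \<or> a + b - c - d \<le> 0"
  shows "a * b \<le> c * d"
proof -
  consider "(a/(1-a)) * (b/(1-b)) / ((c/(1-c)) * (d/(1-d))) \<le> 1" | "a*b/(c*d) \<le> 1" | "a + b - c - d \<le> 0"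
    using h by blast
  then show ?thesis
  proof cases
    case 1
    have "(a/(1-a)) * (b/(1-b)) \<le> (c/(1-c)) * (d/(1-d))"
    proof -
      have "(c/(1-c)) * (d/(1-d)) > 0" using assms by simp
      thus ?thesis using 1 divide_le_eq_1_pos by blast
    qed
    moreover have "(a/(1-a)) * (b/(1-b)) = (a*b)/((1-a)*(1-b))" "(c/(1-c)) * (d/(1-d)) = (c*d)/((1-c)*(1-d))" by simp_all
    ultimately have "(a*b)/((1-a)*(1-b)) \<le> (c*d)/((1-c)*(1-d))" by simp
    moreover have "(1-a)*(1-b) > 0" "(1-c)*(1-d) > 0" using assms by auto
    ultimately have "a*b*((1-c)*(1-d)) \<le> c*d*((1-a)*(1-b))" using frac_le_cross by blast
    thus ?thesis using or_gen assms by blast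
  next
    case 2 thus ?thesis using assms by (simp add: divide_le_eq)
  next
    case 3 thus ?thesis using rd_gen[of a b c d] assms by linarith
  qed
qed

theorem mainTheorem4:
  fixes q :: "nat \<Rightarrow> nat \<Rightarrow> nat \<Rightarrow> real"
  assumes "is_joint_dist q"
  shows "((I_OR q \<le> 1 \<or> I_RR q \<le> 1 \<or> I_RD q \<le> 0) \<and>
          ((nondec_d (pS q) \<and> nondec_e (pS q)) \<or> (noninc_d (pS q) \<and> noninc_e (pS q)))
          \<longrightarrow> OR_ED_given_S q 1 \<le> OR_ED q)
       \<and> ((I_OR q \<ge> 1 \<or> I_RR q \<ge> 1 \<or> I_RD q \<ge> 0) \<and>
          ((nondec_d (pS q) \<and> noninc_e (pS q)) \<or> (noninc_d (pS q) \<and> nondec_e (pS q)))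
          \<longrightarrow> OR_ED_given_S q 1 \<ge> OR_ED q)"
proof -
  have pos: "\<And>e d s. e \<in> {0,1} \<Longrightarrow> d \<in> {0,1} \<Longrightarrow> s \<in> {0,1} \<Longrightarrow> q e d s > 0"
    using assms unfolding is_joint_dist_def by blast
  have PED: "\<And>e d. P_ED q e d = q e d 0 + q e d 1" unfolding P_ED_def by simp
  have pbnd: "0 < pS q d e \<and> pS q d e < 1" if "e \<in> {0,1}" "d \<in> {0,1}" for d e
    using pos[of e d 0] pos[of e d 1] that unfolding pS_def PED by (simp add: field_simps)
  have q1: "q e d 1 = pS q d e * P_ED q e d" if "e \<in> {0,1}" "d \<in> {0,1}" for d e
    using pos[of e d 0] pos[of e d 1] that unfolding pS_def PED by (simp add: field_simps)
  have PSpos: "P_S q 1 > 0" unfolding P_S_def using pos[of _ _ 1]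
    by (simp add: add_pos_pos)
  define a where "a = pS q 1 1"
  define b where "b = pS q 0 0"
  define c where "c = pS q 1 0"
  define d where "d = pS q 0 1"
  have ab: "0 < a" "a < 1" "0 < b" "b < 1" "0 < c" "c < 1" "0 < d" "d < 1"
    unfolding a_def b_def c_def d_def using pbnd by auto
  have Pp: "P_ED q e d > 0" if "e \<in> {0,1}" "d \<in> {0,1}" for e d
    using pos[of e d 0] pos[of e d 1] that PED by simp
  have eq: "OR_ED_given_S q 1 = (a * b / (c * d)) * OR_ED q"
    unfolding OR_ED_given_S_def P_ED_given_S_def OR_ED_def
    using q1[of 1 1] q1[of 0 0] q1[of 1 0] q1[of 0 1] PSpos ab Pp[of 1 1] Pp[of 0 0] Pp[of 1 0] Pp[of 0 1]
    unfolding a_def b_def c_def d_def by (simp add: field_simps)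
  have ORpos: "OR_ED q > 0" unfolding OR_ED_def
    using Pp[of 1 1] Pp[of 0 0] Pp[of 1 0] Pp[of 0 1] by simp
  have IOR: "I_OR q = (a/(1-a)) * (b/(1-b)) / ((c/(1-c)) * (d/(1-d)))"
    unfolding I_OR_def oS_def a_def b_def c_def d_def ..
  have IRR: "I_RR q = a*b/(c*d)" unfolding I_RR_def a_def b_def c_def d_def ..
  have IRD: "I_RD q = a + b - c - d" unfolding I_RD_def a_def b_def c_def d_def ..
  have mono: "nondec_d (pS q) \<longleftrightarrow> a \<ge> d \<and> c \<ge> b"
    "nondec_e (pS q) \<longleftrightarrow> a \<ge> c \<and> d \<ge> b"
    "noninc_d (pS q) \<longleftrightarrow> a \<le> d \<and> c \<le> b"
    "noninc_e (pS q) \<longleftrightarrow> a \<le> c \<and> d \<le> b"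
    unfolding nondec_d_def nondec_e_def noninc_d_def noninc_e_def a_def b_def c_def d_def by auto
  show ?thesis
  proof (intro conjI impI)
    assume h: "(I_OR q \<le> 1 \<or> I_RR q \<le> 1 \<or> I_RD q \<le> 0) \<and>
          ((nondec_d (pS q) \<and> nondec_e (pS q)) \<or> (noninc_d (pS q) \<and> noninc_e (pS q)))"
    have "a * b \<le> c * d"
      apply (rule key) using ab h IOR IRR IRD mono by auto
    hence "a * b / (c * d) \<le> 1" using ab by (simp add: divide_le_eq)
    thus "OR_ED_given_S q 1 \<le> OR_ED q" using eq ORpos
      by (metis mult_le_cancel_right2 order_less_imp_not_less)
  next
    assume h: "(I_OR q \<ge> 1 \<or> I_RR q \<ge> 1 \<or> I_RD q \<ge> 0) \<and>
          ((nondec_d (pS q) \<and> noninc_e (pS q)) \<or> (noninc_d (pS q) \<and> nondec_e (pS q)))"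
    have h1: "(c/(1-c)) * (d/(1-d)) / ((a/(1-a)) * (b/(1-b))) \<le> 1 \<or> c*d/(a*b) \<le> 1 \<or> c + d - a - b \<le> 0"
    proof -
      have x: "\<And>x y::real. x > 0 \<Longrightarrow> y > 0 \<Longrightarrow> x / y \<ge> 1 \<Longrightarrow> y / x \<le> 1"
        by (simp add: divide_le_eq le_divide_eq)
      have "(a/(1-a)) * (b/(1-b)) > 0" "(c/(1-c)) * (d/(1-d)) > 0" "a*b > 0" "c*d>0" using ab by auto
      note P = this
      have e1: "(c/(1-c)) * (d/(1-d)) / ((a/(1-a)) * (b/(1-b))) = 1 / I_OR q" unfolding IOR using P by (simp add: mult_ac)
      have e2: "c*d/(a*b) = 1 / I_RR q" unfolding IRR by simp
      have "I_OR q \<ge> 1 \<or> I_RR q \<ge> 1 \<or> I_RD q \<ge> 0" using h by blast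
      thus ?thesis unfolding e1 e2 using IRD by auto
    qed
    have "c * d \<le> a * b"
      apply (rule key[of c d a b]) using ab h1 mono h by auto
    hence "a * b / (c * d) \<ge> 1" using ab by (simp add: le_divide_eq)
    thus "OR_ED_given_S q 1 \<ge> OR_ED q" using eq ORpos
      by (metis mult_le_cancel_right1 order_less_imp_not_less)
  qed
qed

end
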